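(* Let $m_1,m_2$ be positive real numbers with $m_1\leq 1.8m_2$. Then the complete graph $K_t$ belongs to $\mathcal{G}_{m_1,m_2}$ for every integer $1\leq t\leq \lfloor 2m_1\rfloor$.
   Context: All graphs are finite and simple. For a graph $H$, $|H|$ denotes its number of vertices and $\lVert H\rVert$ its number of edges. For real numbers $m_1,m_2$, $\mathcal{G}_{m_1,m_2}$ is the class of graphs $G$ such that $\lVert H\rVert\leq m_1|H|$ for every subgraph $H$ of $G$, and $\lVert H\rVert\leq m_2|H|$ for every bipartite subgraph $H$ of $G$. *)

theory Defs
  imports Complex_Main
begin

definition simple_graph :: "'a set \<Rightarrow> 'a set set \<Rightarrow> bool" where
  "simple_graph V E \<longleftrightarrow> finite V \<and> (\<forall>e\<in>E. e \<subseteq> V \<and> card e = 2)"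

definition subgraph :: "'a set \<Rightarrow> 'a set set \<Rightarrow> 'a set \<Rightarrow> 'a set set \<Rightarrow> bool" where
  "subgraph V' E' V E \<longleftrightarrow> V' \<subseteq> V \<and> E' \<subseteq> E \<and> (\<forall>e\<in>E'. e \<subseteq> V')"

definition bipartite :: "'a set \<Rightarrow> 'a set set \<Rightarrow> bool" where
  "bipartite V E \<longleftrightarrow> (\<exists>A B. A \<inter> B = {} \<and> A \<union> B = V \<and>
      (\<forall>e\<in>E. e \<inter> A \<noteq> {} \<and> e \<inter> B \<noteq> {}))"

definition in_G_class :: "real \<Rightarrow> real \<Rightarrow> 'a set \<Rightarrow> 'a set set \<Rightarrow> bool" where
  "in_G_class m1 m2 V E \<longleftrightarrow>
     (\<forall>V' E'. subgraph V' E' V E \<longrightarrow> real (card E') \<le> m1 * real (card V')) \<and>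
     (\<forall>V' E'. subgraph V' E' V E \<and> bipartite V' E' \<longrightarrow> real (card E') \<le> m2 * real (card V'))"

definition complete_verts :: "nat \<Rightarrow> nat set" where
  "complete_verts t = {0..<t}"

definition complete_edges :: "nat \<Rightarrow> nat set set" where
  "complete_edges t = {{u, v} | u v. u < t \<and> v < t \<and> u \<noteq> v}"

end

theory Submission
  imports Defs
begin

lemma ce_card2: "e \<in> complete_edges t \<Longrightarrow> card e = 2"
  unfolding complete_edges_def by auto

lemma gen_bound:
  assumes "V' \<subseteq> {0..<t}" "E' \<subseteq> complete_edges t" "\<forall>e\<in>E'. e \<subseteq> V'"
  shows "2 * card E' \<le> card V' * (card V' - 1)"
proof -
  have fV: "finite V'" using assms(1) finite_subset by blast
  have "E' \<subseteq> {B. B \<subseteq> V' \<and> card B = 2}" using assms ce_card2 by blast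
  hence "card E' \<le> card {B. B \<subseteq> V' \<and> card B = 2}"
    by (intro card_mono) (auto simp: fV)
  also have "\<dots> = card V' choose 2" using n_subsets[OF fV] by simp
  finally show ?thesis by (simp add: choose_two)
qed

lemma bip_bound:
  assumes "E' \<subseteq> complete_edges t" "\<forall>e\<in>E'. e \<subseteq> V'"
    and "A \<inter> B = {}" "A \<union> B = V'" "\<forall>e\<in>E'. e \<inter> A \<noteq> {} \<and> e \<inter> B \<noteq> {}"
    and "finite V'"
  shows "card E' \<le> card A * card B"
proof -
  have "E' \<subseteq> (\<lambda>(a,b). {a,b}) ` (A \<times> B)"
  proof
    fix e assume e: "e \<in> E'"
    then obtain u v where uv: "e = {u,v}" "u \<noteq> v" using assms(1) unfolding complete_edges_def by blast
    obtain a where a: "a \<in> e" "a \<in> A" using assms(5) e by blast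
    obtain b where b: "b \<in> e" "b \<in> B" using assms(5) e by blast
    have "a \<noteq> b" using a b assms(3) by blast
    hence "e = {a,b}" using uv a b by auto
    thus "e \<in> (\<lambda>(a,b). {a,b}) ` (A \<times> B)" using a b by blast
  qed
  hence "card E' \<le> card ((\<lambda>(a,b). {a,b}) ` (A \<times> B))"
    using assms by (intro card_mono) auto
  also have "\<dots> \<le> card (A \<times> B)" by (rule card_image_le) (use assms in auto)
  finally show ?thesis by (simp add: card_cartesian_product)
qed

theorem lemma2:
  fixes m1 m2 :: real and t :: nat
  assumes "m1 > 0" and "m2 > 0" and "m1 \<le> 1.8 * m2"
    and "1 \<le> t" and "int t \<le> \<lfloor>2 * m1\<rfloor>"
  shows "in_G_class m1 m2 (complete_verts t) (complete_edges t)"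
proof -
  have tm: "real t \<le> 2 * m1" using assms(5) by linarith
  show ?thesis unfolding in_G_class_def
  proof (intro conjI allI impI)
    fix V' E' assume s: "subgraph V' E' (complete_verts t) (complete_edges t)"
    hence V: "V' \<subseteq> {0..<t}" and E: "E' \<subseteq> complete_edges t" and ee: "\<forall>e\<in>E'. e \<subseteq> V'"
      unfolding subgraph_def complete_verts_def by auto
    have n: "card V' \<le> t" using card_mono[OF _ V] by simp
    have h: "2 * card E' \<le> card V' * (card V' - 1)" by (rule gen_bound[OF V E ee])
    have "card V' * (card V' - 1) \<le> card V' * (t - 1)" using n by (intro mult_le_mono2) simp
    with h have "2 * real (card E') \<le> real (card V') * (real t - 1)"
      using assms(4) by (metis (mono_tags, opaque_lifting) le_trans of_nat_diff of_nat_le_iff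
          of_nat_mult of_nat_numeral of_nat_1)
    also have "\<dots> \<le> real (card V') * (2 * m1)" using tm by (intro mult_left_mono) auto
    finally show "real (card E') \<le> m1 * real (card V')" by (simp only: mult.commute[of m1])
  next
    fix V' E' assume s: "subgraph V' E' (complete_verts t) (complete_edges t) \<and> bipartite V' E'"
    hence V: "V' \<subseteq> {0..<t}" and E: "E' \<subseteq> complete_edges t" and ee: "\<forall>e\<in>E'. e \<subseteq> V'"
      unfolding subgraph_def complete_verts_def by auto
    obtain A B where AB: "A \<inter> B = {}" "A \<union> B = V'" "\<forall>e\<in>E'. e \<inter> A \<noteq> {} \<and> e \<inter> B \<noteq> {}"
      using s unfolding bipartite_def by blast
    have fV: "finite V'" using V finite_subset by blast
    have n: "card V' \<le> t" using card_mono[OF _ V] by simp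
    have cV: "card V' = card A + card B" using AB fV
      by (metis card_Un_disjoint finite_Un)
    have h: "card E' \<le> card A * card B" by (rule bip_bound[OF E ee AB fV])
    define a where "a = real (card A)"
    define b where "b = real (card B)"
    have "real (card E') \<le> a * b" using h unfolding a_def b_def
      by (metis of_nat_le_iff of_nat_mult)
    also have "\<dots> \<le> (a + b)^2 / 4"
    proof -
      have "(a+b)^2/4 - a*b = (a-b)^2/4" by (simp add: power2_eq_square field_simps)
      moreover have "(a-b)^2/4 \<ge> 0" by simp
      ultimately show ?thesis by linarith
    qed
    also have "\<dots> = (a+b) * (a+b) / 4" by (simp add: power2_eq_square)
    also have "\<dots> \<le> (a+b) * real t / 4"
      using n cV unfolding a_def b_def by (intro divide_right_mono mult_left_mono) auto
    also have "\<dots> \<le> m2 * (a+b)"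
    proof -
      have "real t \<le> 4 * m2" using tm assms(3) by linarith
      moreover have "a + b \<ge> 0" unfolding a_def b_def by simp
      ultimately have "(a+b) * real t \<le> (a+b) * (4*m2)" by (intro mult_left_mono) auto
      thus ?thesis by (simp add: mult_ac)
    qed
    finally show "real (card E') \<le> m2 * real (card V')" using cV unfolding a_def b_def by simp
  qed
qed

end
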